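(* Fix $C\ge0$. As $n\to\infty$, uniformly for integers $0\le\kappa,N\le n+C$ with $N\le\tfrac43\kappa+C$, \[ \sum_{g\in\mathcal M^\times(\kappa)}q^{\Delta_A(g;N)/2}\ll_{A} q^{\kappa+3N/8+o(n)}. \]
   Context: $q$ is a fixed odd prime power; fix $m\ge0$, $c_0,\dots,c_m\in\mathbb F_q$ with $c_m\ne0$, $A(z)=c_0+\tfrac12\sum_{\ell=1}^m c_\ell(z^\ell+z^{-\ell})$. $B_A(f,h)=\operatorname{CT}\,A(z)f(z)h(z^{-1})$ (constant term of the Laurent polynomial). $V_N$ is the space of polynomials of degree $\le N$; for $0\ne g$, $B_{g,N}(h,w)=B_A(gh,gw)$ on $V_N$ and $\Delta_A(g;N)=\dim\operatorname{rad}(B_{g,N})=N+1-\operatorname{rank}B_{g,N}$. $\mathcal M^\times(\kappa)$ is the set of monic polynomials $g$ of degree $\kappa$ with $g(0)\neq0$. Implied constants depend only on $q$, $C$ and $c_0,\dots,c_m$; $q^{o(n)}$ is a factor $q^{\varepsilon(n)n}$ with $\varepsilon(n)\to0$. *)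

theory Defs
  imports Complex_Main "HOL-Computational_Algebra.Polynomial" "HOL-Library.Cardinality"
begin

text \<open>Constant term of z^k f(z) h(z^-1), for k an integer.\<close>
definition ct_shift :: "int \<Rightarrow> 'a::comm_ring_1 poly \<Rightarrow> 'a poly \<Rightarrow> 'a" where
  "ct_shift k f h = (\<Sum>i\<le>degree f. \<Sum>j\<le>degree h.
      if int i - int j + k = 0 then coeff f i * coeff h j else 0)"

text \<open>B_A(f,h) = CT A(z) f(z) h(z^-1), with
  A(z) = c_0 + 1/2 sum_{l=1..m} c_l (z^l + z^-l).\<close>
definition B_A :: "(nat \<Rightarrow> 'a::field) \<Rightarrow> nat \<Rightarrow> 'a poly \<Rightarrow> 'a poly \<Rightarrow> 'a" where
  "B_A c m f h = c 0 * ct_shift 0 f h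
     + inverse 2 * (\<Sum>l\<in>{1..m}. c l * (ct_shift (int l) f h + ct_shift (- int l) f h))"

definition V :: "nat \<Rightarrow> 'a::zero poly set" where
  "V N = {h. degree h \<le> N}"

definition rad_B :: "(nat \<Rightarrow> 'a::field) \<Rightarrow> nat \<Rightarrow> 'a poly \<Rightarrow> nat \<Rightarrow> 'a poly set" where
  "rad_B c m g N = {h \<in> V N. \<forall>w \<in> V N. B_A c m (g * h) (g * w) = 0}"

definition Delta_A :: "(nat \<Rightarrow> 'a::field) \<Rightarrow> nat \<Rightarrow> 'a poly \<Rightarrow> nat \<Rightarrow> nat" where
  "Delta_A c m g N = vector_space.dim (smult :: 'a \<Rightarrow> 'a poly \<Rightarrow> 'a poly) (rad_B c m g N)"

definition Mx :: "nat \<Rightarrow> 'a::field poly set" where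
  "Mx \<kappa> = {g. lead_coeff g = 1 \<and> degree g = \<kappa> \<and> coeff g 0 \<noteq> 0}"

end

theory Submission
  imports Defs "HOL-Computational_Algebra.Polynomial_Factorial" "HOL-Library.FuncSet"
begin

lemma inj_coeffs_list:
  "inj_on (\<lambda>p::'a::zero poly. map (coeff p) [0..<n+1]) {p. degree p \<le> n}"
proof (rule inj_onI)
  fix p q :: "'a poly"
  assume p: "p \<in> {p. degree p \<le> n}" and q: "q \<in> {p. degree p \<le> n}"
    and e: "map (coeff p) [0..<n+1] = map (coeff q) [0..<n+1]"
  show "p = q"
  proof (rule poly_eqI)
    fix i
    show "coeff p i = coeff q i"
    proof (cases "i \<le> n")
      case True
      have "coeff p i = map (coeff p) [0..<n+1] ! i" using True by (subst nth_map) (auto simp del: upt_Suc)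
      also have "\<dots> = map (coeff q) [0..<n+1] ! i" using e by (simp only:)
      also have "\<dots> = coeff q i" using True by (subst nth_map) (auto simp del: upt_Suc)
      finally show ?thesis .
    next
      case False
      then show ?thesis using p q by (simp add: coeff_eq_0)
    qed
  qed
qed

lemma finite_deg_le: "finite {p::'a::{finite,zero} poly. degree p \<le> n}"
proof -
  have "(\<lambda>p::'a poly. map (coeff p) [0..<n+1]) ` {p. degree p \<le> n} \<subseteq> {xs. set xs \<subseteq> UNIV \<and> length xs = n+1}"
    by auto
  moreover have "finite {xs::'a list. set xs \<subseteq> UNIV \<and> length xs = n+1}"
    by (rule finite_lists_length_eq) simp
  ultimately have "finite ((\<lambda>p::'a poly. map (coeff p) [0..<n+1]) ` {p. degree p \<le> n})"
    by (rule finite_subset)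
  then show ?thesis using inj_coeffs_list by (rule finite_imageD)
qed

lemma card_deg_le: "card {p::'a::{finite,zero} poly. degree p \<le> n} \<le> CARD('a) ^ (n+1)"
proof -
  have "card {p::'a poly. degree p \<le> n} \<le> card {xs::'a list. set xs \<subseteq> UNIV \<and> length xs = n+1}"
    by (rule card_inj_on_le[OF inj_coeffs_list]) (auto intro: finite_lists_length_eq[of UNIV, simplified])
  also have "\<dots> = CARD('a) ^ (n+1)" by (rule card_lists_length_eq) simp
  finally show ?thesis .
qed

lemma card_deg_ge: "CARD('a::{finite,zero}) ^ (n+1) \<le> card {p::'a poly. degree p \<le> n}"
proof -
  have "CARD('a) ^ (n+1) = card {xs::'a list. set xs \<subseteq> UNIV \<and> length xs = n+1}"
    by (rule card_lists_length_eq[symmetric]) simp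
  also have "\<dots> \<le> card {p::'a poly. degree p \<le> n}"
  proof (rule card_inj_on_le[OF _ _ finite_deg_le])
    show "inj_on Poly {xs::'a list. set xs \<subseteq> UNIV \<and> length xs = n+1}"
    proof (rule inj_onI)
      fix xs ys :: "'a list"
      assume xs: "xs \<in> {xs::'a list. set xs \<subseteq> UNIV \<and> length xs = n+1}"
        and ys: "ys \<in> {xs::'a list. set xs \<subseteq> UNIV \<and> length xs = n+1}" and e: "Poly xs = Poly ys"
      show "xs = ys"
      proof (rule nth_equalityI)
        show "length xs = length ys" using xs ys by simp
        fix i assume "i < length xs"
        moreover have "coeff (Poly xs) i = coeff (Poly ys) i" using e by simp
        ultimately show "xs ! i = ys ! i" using xs ys by (simp add: nth_default_nth)
      qed
    qed
    show "Poly ` {xs::'a list. set xs \<subseteq> UNIV \<and> length xs = n+1} \<subseteq> {p. degree p \<le> n}"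
    proof
      fix p assume "p \<in> Poly ` {xs::'a list. set xs \<subseteq> UNIV \<and> length xs = n+1}"
      then obtain xs where "p = Poly xs" "length xs = n+1" by auto
      then show "p \<in> {p. degree p \<le> n}"
        by (auto intro!: degree_le simp: nth_default_def)
    qed
  qed
  finally show ?thesis .
qed

lemma even_card_inv:
  fixes f :: "'b \<Rightarrow> 'b"
  assumes inv: "\<And>x. f (f x) = x" and nf: "\<And>x. f x \<noteq> x"
  shows "finite S \<Longrightarrow> f ` S \<subseteq> S \<Longrightarrow> even (card S)"
proof (induction "card S" arbitrary: S rule: less_induct)
  case less
  show ?case
  proof (cases "S = {}")
    case True then show ?thesis by simp
  next
    case False
    then obtain x where x: "x \<in> S" by auto
    have fx: "f x \<in> S" using less.prems x by auto
    define S' where "S' = S - {x, f x}"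
    have c2: "card {x, f x} = 2" using nf[of x] by auto
    have sub: "{x, f x} \<subseteq> S" using x fx by auto
    have "card S' = card S - 2" unfolding S'_def
      using card_Diff_subset[OF _ sub] less.prems(1) c2 by (simp add: finite_subset)
    moreover have "2 \<le> card S" using card_mono[OF less.prems(1) sub] c2 by simp
    ultimately have cS: "card S = card S' + 2" by simp
    have "f ` S' \<subseteq> S'"
    proof
      fix y assume "y \<in> f ` S'"
      then obtain z where z: "z \<in> S'" "y = f z" by auto
      then have "y \<in> S" using less.prems unfolding S'_def by auto
      moreover have "y \<noteq> x" using z inv[of z] unfolding S'_def by auto
      moreover have "y \<noteq> f x" using z inv[of z] inv[of x] unfolding S'_def by (metis DiffD2 insertI1)
      ultimately show "y \<in> S'" unfolding S'_def by auto
    qed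
    moreover have "finite S'" using less.prems unfolding S'_def by auto
    ultimately have "even (card S')" using less.hyps cS by auto
    then show ?thesis using cS by simp
  qed
qed

lemma two_neq_zero:
  assumes "odd CARD('a::{field,finite})"
  shows "(2::'a) \<noteq> 0"
proof
  assume h: "(2::'a) = 0"
  have "even (card (UNIV::'a set))"
  proof (rule even_card_inv[of "\<lambda>x. x + 1"])
    fix x :: 'a
    show "x + 1 + 1 = x" using h by (simp add: add.assoc one_add_one)
    show "x + 1 \<noteq> x" by simp
  qed auto
  then show False using assms by simp
qed

definition revd :: "nat \<Rightarrow> 'a::comm_ring_1 poly \<Rightarrow> 'a poly" where
  "revd M p = monom 1 (M - degree p) * reflect_poly p"

lemma coeff_revd:
  assumes "degree p \<le> M"
  shows "coeff (revd M p) r = (if r \<le> M then coeff p (M - r) else 0)"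
proof -
  have "coeff (revd M p) r = (if r < M - degree p then 0 else coeff (reflect_poly p) (r - (M - degree p)))"
    unfolding revd_def by (simp add: coeff_monom_mult)
  also have "\<dots> = (if r \<le> M then coeff p (M - r) else 0)"
    using assms by (auto simp: coeff_reflect_poly coeff_eq_0)
  finally show ?thesis .
qed

lemma degree_revd: "degree p \<le> M \<Longrightarrow> degree (revd M p) \<le> M"
  by (rule degree_le) (simp add: coeff_revd)

lemma revd_0 [simp]: "revd M 0 = 0"
  by (simp add: revd_def)

lemma revd_revd: "degree p \<le> M \<Longrightarrow> revd M (revd M p) = p"
  by (rule poly_eqI) (auto simp: coeff_revd degree_revd coeff_eq_0)

lemma revd_mult:
  fixes p q :: "'a::idom poly"
  assumes "degree p \<le> a" "degree q \<le> b"
  shows "revd (a+b) (p*q) = revd a p * revd b q"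
proof (cases "p = 0 \<or> q = 0")
  case True then show ?thesis by (auto simp: revd_def)
next
  case False
  then have d: "degree (p*q) = degree p + degree q" by (simp add: degree_mult_eq)
  have "monom (1::'a) (a + b - degree (p*q)) = monom 1 (a - degree p) * monom 1 (b - degree q)"
    using assms d by (simp add: mult_monom)
  then show ?thesis unfolding revd_def by (simp add: reflect_poly_mult ac_simps)
qed

lemma revd_add: "degree p \<le> M \<Longrightarrow> degree q \<le> M \<Longrightarrow> revd M (p + q) = revd M p + revd M q"
  by (rule poly_eqI) (simp add: coeff_revd degree_add_le)

lemma revd_diff: "degree p \<le> M \<Longrightarrow> degree (q::'a::comm_ring_1 poly) \<le> M \<Longrightarrow> revd M (p - q) = revd M p - revd M q"
  by (rule poly_eqI) (simp add: coeff_revd degree_diff_le)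

lemma revd_smult: "degree p \<le> M \<Longrightarrow> revd M (smult s p) = smult s (revd M p)"
  by (rule poly_eqI) (simp add: coeff_revd order.trans[OF degree_smult_le])

lemma pairing:
  fixes X w :: "'a::comm_ring_1 poly"
  assumes "degree w \<le> M"
  shows "(\<Sum>j\<le>M. coeff w j * coeff X (j + n)) = coeff (X * revd M w) (n + M)"
proof -
  have "coeff (X * revd M w) (n + M) = (\<Sum>i\<le>n+M. coeff X i * coeff (revd M w) (n + M - i))"
    by (simp add: coeff_mult)
  also have "\<dots> = (\<Sum>i\<le>n+M. if n \<le> i then coeff X i * coeff w (i - n) else 0)"
    using assms by (intro sum.cong) (auto simp: coeff_revd)
  also have "\<dots> = (\<Sum>i\<in>{n..n+M}. coeff X i * coeff w (i - n))"
    by (rule sum.mono_neutral_cong_right) auto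
  also have "\<dots> = (\<Sum>j\<in>{0..M}. coeff X (j + n) * coeff w j)"
    using sum.shift_bounds_cl_nat_ivl[of "\<lambda>i. coeff X i * coeff w (i - n)" 0 n M]
    by (simp add: add.commute)
  finally show ?thesis by (simp add: atLeast0AtMost mult.commute)
qed


lemma ct_shift_eq:
  fixes f h :: "'a::comm_ring_1 poly"
  assumes dh: "degree h \<le> M" and km: "0 \<le> int m + k"
  shows "ct_shift k f h = (\<Sum>j\<le>M. coeff h j * coeff (monom 1 (nat (int m + k)) * f) (j + m))"
proof -
  have inner: "(\<Sum>i\<le>degree f. if int i - int j + k = 0 then coeff f i * coeff h j else 0)
      = coeff h j * coeff (monom 1 (nat (int m + k)) * f) (j + m)" for j
  proof (cases "k \<le> int j")
    case True
    let ?i = "nat (int j - k)"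
    have "(\<Sum>i\<le>degree f. if int i - int j + k = 0 then coeff f i * coeff h j else 0)
        = (\<Sum>i\<le>degree f. if i = ?i then coeff f i * coeff h j else 0)"
      using True by (intro sum.cong) auto
    also have "\<dots> = (if ?i \<in> {..degree f} then coeff f ?i * coeff h j else 0)"
      by (rule sum.delta) simp
    also have "\<dots> = coeff f ?i * coeff h j" by (auto simp: coeff_eq_0)
    also have "\<dots> = coeff h j * coeff (monom 1 (nat (int m + k)) * f) (j + m)"
    proof -
      have "\<not> j + m < nat (int m + k)" using True km by linarith
      moreover have "j + m - nat (int m + k) = ?i" using True km by linarith
      ultimately have "coeff (monom 1 (nat (int m + k)) * f) (j + m) = coeff f ?i"
        by (simp add: coeff_monom_mult)
      then show ?thesis by (simp add: mult.commute)
    qed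
    finally show ?thesis .
  next
    case False
    then have "(\<Sum>i\<le>degree f. if int i - int j + k = 0 then coeff f i * coeff h j else 0) = 0"
      by (intro sum.neutral) auto
    moreover have "j + m < nat (int m + k)" using False km by linarith
    ultimately show ?thesis by (simp add: coeff_monom_mult)
  qed
  have "ct_shift k f h = (\<Sum>j\<le>degree h. \<Sum>i\<le>degree f. if int i - int j + k = 0 then coeff f i * coeff h j else 0)"
    unfolding ct_shift_def by (rule sum.swap)
  also have "\<dots> = (\<Sum>j\<le>degree h. coeff h j * coeff (monom 1 (nat (int m + k)) * f) (j + m))"
    using inner by simp
  also have "\<dots> = (\<Sum>j\<le>M. coeff h j * coeff (monom 1 (nat (int m + k)) * f) (j + m))"
    using dh by (intro sum.mono_neutral_left) (auto simp: coeff_eq_0)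
  finally show ?thesis .
qed

definition Ap :: "(nat \<Rightarrow> 'a::field) \<Rightarrow> nat \<Rightarrow> 'a poly" where
  "Ap c m = smult (c 0) (monom 1 m)
     + smult (inverse 2) (\<Sum>l\<in>{1..m}. smult (c l) (monom 1 (m + l) + monom 1 (m - l)))"

lemma B_A_eq:
  fixes f h :: "'a::field poly"
  assumes dh: "degree h \<le> M"
  shows "B_A c m f h = (\<Sum>j\<le>M. coeff h j * coeff (Ap c m * f) (j + m))"
proof -
  define T where "T n = (\<Sum>j\<le>M. coeff h j * coeff (monom 1 n * f) (j + m))" for n
  have t0: "ct_shift 0 f h = T m" unfolding T_def using ct_shift_eq[OF dh, of m 0] by simp
  have t1: "ct_shift (int l) f h = T (m + l)" for l
    unfolding T_def using ct_shift_eq[OF dh, of m "int l"] by (simp add: nat_add_distrib)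
  have t2: "ct_shift (- int l) f h = T (m - l)" if "l \<le> m" for l
  proof -
    have "nat (int m + - int l) = m - l" using that by simp
    then show ?thesis unfolding T_def using ct_shift_eq[OF dh, of m "- int l"] that by simp
  qed
  have "B_A c m f h = c 0 * T m + inverse 2 * (\<Sum>l\<in>{1..m}. c l * (T (m + l) + T (m - l)))"
    unfolding B_A_def using t0 t1 t2 by simp
  also have "\<dots> = (\<Sum>j\<le>M. coeff h j * coeff (Ap c m * f) (j + m))"
  proof -
    have "Ap c m * f = smult (c 0) (monom 1 m * f)
       + smult (inverse 2) (\<Sum>l\<in>{1..m}. smult (c l) (monom 1 (m + l) * f + monom 1 (m - l) * f))"
      unfolding Ap_def by (simp add: distrib_right sum_distrib_right mult_smult_left)
    then have "coeff (Ap c m * f) (j + m) = c 0 * coeff (monom 1 m * f) (j + m)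
       + inverse 2 * (\<Sum>l\<in>{1..m}. c l * (coeff (monom 1 (m + l) * f) (j + m) + coeff (monom 1 (m - l) * f) (j + m)))"
      for j by (simp add: coeff_sum)
    then have "(\<Sum>j\<le>M. coeff h j * coeff (Ap c m * f) (j + m))
       = (\<Sum>j\<le>M. c 0 * (coeff h j * coeff (monom 1 m * f) (j + m))
          + inverse 2 * (\<Sum>l\<in>{1..m}. c l * (coeff h j * coeff (monom 1 (m + l) * f) (j + m))
                                  + c l * (coeff h j * coeff (monom 1 (m - l) * f) (j + m))))"
      by (simp add: algebra_simps sum_distrib_left)
    also have "\<dots> = c 0 * T m + inverse 2 * (\<Sum>l\<in>{1..m}. c l * (T (m + l) + T (m - l)))"
      unfolding T_def by (simp add: sum.distrib sum_distrib_left algebra_simps) (rule arg_cong2[where f="(+)"]; rule sum.swap)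
    finally show ?thesis by simp
  qed
  finally show ?thesis .
qed


definition ind :: "bool \<Rightarrow> 'a::field" where "ind b = (if b then 1 else 0)"

lemma coeff_Ap:
  "coeff (Ap c m) r = c 0 * ind (m = r) + inverse 2 * (\<Sum>l\<in>{1..m}. c l * (ind (m + l = r) + ind (m - l = r)))"
  unfolding Ap_def ind_def by (simp add: coeff_sum coeff_monom)

lemma coeff_Ap_sym:
  assumes "r \<le> 2*m"
  shows "coeff (Ap c m) (2*m - r) = coeff (Ap c m) r"
proof -
  have a: "(m = 2*m - r) = (m = r)" using assms by auto
  have b: "ind (m + l = 2*m - r) + ind (m - l = 2*m - r) = (ind (m + l = r) + ind (m - l = r) :: 'a)"
    if "l \<in> {1..m}" for l
  proof -
    have "(m + l = 2*m - r) = (m - l = r)" "(m - l = 2*m - r) = (m + l = r)" using that assms by auto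
    then show ?thesis by (simp add: add.commute)
  qed
  have "(\<Sum>l\<in>{1..m}. c l * (ind (m + l = 2*m - r) + ind (m - l = 2*m - r)))
      = (\<Sum>l\<in>{1..m}. c l * (ind (m + l = r) + ind (m - l = r)) :: 'a)"
    by (intro sum.cong refl) (simp add: b)
  then show ?thesis unfolding coeff_Ap a by simp
qed

lemma degree_Ap: "degree (Ap c m) \<le> 2*m"
  by (rule degree_le) (auto simp: coeff_Ap ind_def intro!: sum.neutral)

lemma revd_Ap: "revd (2*m) (Ap c m) = Ap c m"
  by (rule poly_eqI) (auto simp: coeff_revd degree_Ap coeff_Ap_sym coeff_eq_0[OF le_less_trans[OF degree_Ap]])

lemma Ap_nz:
  assumes "c m \<noteq> 0" "(2::'a::field) \<noteq> 0"
  shows "Ap c m \<noteq> (0::'a poly)"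
proof -
  have "coeff (Ap c m) (2*m) \<noteq> 0"
  proof (cases "m = 0")
    case True
    then show ?thesis using assms by (simp add: coeff_Ap ind_def)
  next
    case False
    have "(\<Sum>l\<in>{1..m}. c l * (ind (m + l = 2*m) + ind (m - l = 2*m))) = (\<Sum>l\<in>{1..m}. if l = m then c l else 0)"
      using False by (intro sum.cong) (auto simp: ind_def)
    also have "\<dots> = c m" using False by (simp add: sum.delta')
    finally show ?thesis using False assms by (simp add: coeff_Ap ind_def)
  qed
  then show ?thesis by auto
qed

definition Qg :: "(nat \<Rightarrow> 'a::field) \<Rightarrow> nat \<Rightarrow> 'a poly \<Rightarrow> 'a poly" where
  "Qg c m g = Ap c m * g * revd (degree g) g"

lemma degree_Qg: "degree (Qg c m g) \<le> 2 * (degree g + m)"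
proof -
  have "degree (Qg c m g) \<le> degree (Ap c m) + degree g + degree (revd (degree g) g)"
    unfolding Qg_def by (meson add_le_mono degree_mult_le le_refl order_trans)
  also have "\<dots> \<le> 2*m + degree g + degree g"
    using degree_Ap[of c m] degree_revd[of g "degree g"] by simp
  finally show ?thesis by simp
qed

lemma revd_Qg: "revd (2 * (degree g + m)) (Qg c m g) = Qg c m g"
proof -
  have "revd (2*m + (degree g + degree g)) (Ap c m * (g * revd (degree g) g))
     = revd (2*m) (Ap c m) * revd (degree g + degree g) (g * revd (degree g) g)"
    by (rule revd_mult[OF degree_Ap]) (rule order.trans[OF degree_mult_le], simp add: degree_revd)
  also have "revd (degree g + degree g) (g * revd (degree g) g) = revd (degree g) g * g"
    by (subst revd_mult) (simp_all add: degree_revd revd_revd)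
  finally show ?thesis unfolding Qg_def revd_Ap by (simp add: ac_simps)
qed

lemma Qg_nz:
  assumes "c m \<noteq> 0" "(2::'a::field) \<noteq> 0" "g \<noteq> (0::'a poly)"
  shows "Qg c m g \<noteq> 0"
proof -
  have "revd (degree g) g \<noteq> 0" using assms(3) revd_revd[of g "degree g"] by auto
  then show ?thesis unfolding Qg_def using Ap_nz[of c m, OF assms(1,2)] assms(3) by simp
qed

lemma B_gh_gw:
  fixes g h w :: "'a::field poly"
  assumes dh: "degree h \<le> N" and dw: "degree w \<le> N"
  shows "B_A c m (g*h) (g*w) = (\<Sum>k\<le>N. coeff w k * coeff (Qg c m g * h) (k + (degree g + m)))"
proof -
  have dgw: "degree (g*w) \<le> degree g + N"
    using dw by (meson add_le_mono degree_mult_le le_refl order_trans)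
  have "B_A c m (g*h) (g*w) = (\<Sum>j\<le>degree g + N. coeff (g*w) j * coeff (Ap c m * (g*h)) (j + m))"
    by (rule B_A_eq[OF dgw])
  also have "\<dots> = coeff (Ap c m * (g*h) * revd (degree g + N) (g*w)) (m + (degree g + N))"
    by (rule pairing[OF dgw])
  also have "revd (degree g + N) (g*w) = revd (degree g) g * revd N w"
    by (rule revd_mult[OF le_refl dw])
  also have "Ap c m * (g*h) * (revd (degree g) g * revd N w) = (Qg c m g * h) * revd N w"
    unfolding Qg_def by (simp add: ac_simps)
  also have "m + (degree g + N) = (degree g + m) + N" by simp
  also have "coeff (Qg c m g * h * revd N w) ((degree g + m) + N) = (\<Sum>k\<le>N. coeff w k * coeff (Qg c m g * h) (k + (degree g + m)))"
    by (rule pairing[OF dw, symmetric])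
  finally show ?thesis .
qed

lemma rad_char:
  fixes g :: "'a::field poly"
  shows "rad_B c m g N = {h. degree h \<le> N \<and> (\<forall>k\<le>N. coeff (Qg c m g * h) (k + (degree g + m)) = 0)}"
proof (intro set_eqI iffI)
  fix h assume h: "h \<in> rad_B c m g N"
  then have dh: "degree h \<le> N" unfolding rad_B_def V_def by simp
  have "coeff (Qg c m g * h) (k + (degree g + m)) = 0" if k: "k \<le> N" for k
  proof -
    have dw: "degree (monom (1::'a) k) \<le> N" using k by (simp add: degree_monom_eq)
    have "0 = B_A c m (g*h) (g * monom 1 k)" using h dw unfolding rad_B_def V_def by simp
    also have "\<dots> = (\<Sum>k'\<le>N. coeff (monom 1 k) k' * coeff (Qg c m g * h) (k' + (degree g + m)))"
      by (rule B_gh_gw[OF dh dw])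
    also have "\<dots> = (\<Sum>k'\<le>N. if k = k' then coeff (Qg c m g * h) (k' + (degree g + m)) else 0)"
      by (intro sum.cong) (auto simp: coeff_monom)
    also have "\<dots> = coeff (Qg c m g * h) (k + (degree g + m))" using k by (simp add: sum.delta)
    finally show ?thesis by simp
  qed
  with dh show "h \<in> {h. degree h \<le> N \<and> (\<forall>k\<le>N. coeff (Qg c m g * h) (k + (degree g + m)) = 0)}" by simp
next
  fix h assume h: "h \<in> {h. degree h \<le> N \<and> (\<forall>k\<le>N. coeff (Qg c m g * h) (k + (degree g + m)) = 0)}"
  then have dh: "degree h \<le> N" by simp
  have "B_A c m (g*h) (g*w) = 0" if "w \<in> V N" for w
    using h that unfolding V_def by (simp add: B_gh_gw[OF dh])
  then show "h \<in> rad_B c m g N" using dh unfolding rad_B_def V_def by simp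
qed

lemma vs_poly: "vector_space (smult :: 'a::field \<Rightarrow> 'a poly \<Rightarrow> 'a poly)"
  by unfold_locales (simp_all add: smult_add_right smult_add_left)

lemma ms_poly: "module (smult :: 'a::field \<Rightarrow> 'a poly \<Rightarrow> 'a poly)"
  by unfold_locales (simp_all add: smult_add_right smult_add_left)

lemma card_ge_dim:
  fixes R :: "'a::{field,finite} poly set"
  assumes fR: "finite R" and sR: "module.subspace smult R"
  shows "CARD('a) ^ vector_space.dim smult R \<le> card R"
proof -
  obtain B where B: "B \<subseteq> R" "module.independent smult B" "R \<subseteq> module.span smult B"
      "card B = vector_space.dim smult R"
    using vector_space.basis_exists[OF vs_poly, of R] by blast
  have fB: "finite B" using B(1) fR finite_subset by blast
  define \<Phi> where "\<Phi> F = (\<Sum>b\<in>B. smult (F b) b)" for F :: "'a poly \<Rightarrow> 'a"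
  have "\<Phi> ` PiE B (\<lambda>_. UNIV) \<subseteq> R"
  proof
    fix y assume "y \<in> \<Phi> ` PiE B (\<lambda>_. UNIV)"
    then obtain F where y: "y = \<Phi> F" by auto
    show "y \<in> R" unfolding y \<Phi>_def
      by (rule module.subspace_sum[OF ms_poly sR]) (use B(1) module.subspace_scale[OF ms_poly sR] in blast)
  qed
  moreover have "inj_on \<Phi> (PiE B (\<lambda>_. UNIV))"
  proof (rule inj_onI)
    fix F G assume F: "F \<in> PiE B (\<lambda>_. UNIV)" and G: "G \<in> PiE B (\<lambda>_. UNIV)" and e: "\<Phi> F = \<Phi> G"
    have "(\<Sum>b\<in>B. smult (F b - G b) b) = \<Phi> F - \<Phi> G"
      unfolding \<Phi>_def by (simp add: smult_diff_left sum_subtractf)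
    then have z: "(\<Sum>b\<in>B. smult (F b - G b) b) = 0" using e by simp
    have "F b = G b" if "b \<in> B" for b
      using module.independentD[OF ms_poly B(2) fB subset_refl z that] by simp
    then show "F = G" using F G by (intro PiE_ext) auto
  qed
  ultimately have "card (PiE B (\<lambda>_. UNIV::'a set)) \<le> card R"
    using fR by (intro card_inj_on_le) auto
  moreover have "card (PiE B (\<lambda>_. UNIV::'a set)) = CARD('a) ^ card B"
    using fB by (simp add: card_PiE)
  ultimately show ?thesis using B(4) by simp
qed


lemma rad_sub: "rad_B c m g N \<subseteq> {h. degree h \<le> N}"
  unfolding rad_char by auto

lemma finite_rad: "finite (rad_B c m (g::'a::{field,finite} poly) N)"
  by (rule finite_subset[OF rad_sub finite_deg_le])

lemma rad_add: "h1 \<in> rad_B c m g N \<Longrightarrow> h2 \<in> rad_B c m g N \<Longrightarrow> h1 + h2 \<in> rad_B c m g N"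
  unfolding rad_char by (auto simp: distrib_left degree_add_le)

lemma rad_diff: "h1 \<in> rad_B c m g N \<Longrightarrow> h2 \<in> rad_B c m g N \<Longrightarrow> h1 - h2 \<in> rad_B c m g N"
  unfolding rad_char by (auto simp: right_diff_distrib degree_diff_le)

lemma rad_smult: "h \<in> rad_B c m g N \<Longrightarrow> smult s h \<in> rad_B c m g N"
  unfolding rad_char by (auto simp: order.trans[OF degree_smult_le])

lemma rad_zero: "0 \<in> rad_B c m g N"
  unfolding rad_char by auto

lemma rad_subspace: "module.subspace smult (rad_B c m (g::'a::field poly) N)"
  unfolding module.subspace_def[OF ms_poly] using rad_zero rad_add rad_smult by blast

lemma card_rad_ge: "CARD('a) ^ Delta_A c m g N \<le> card (rad_B c m (g::'a::{field,finite} poly) N)"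
  unfolding Delta_A_def by (rule card_ge_dim[OF finite_rad rad_subspace])

lemma card_rad_le: "card (rad_B c m (g::'a::{field,finite} poly) N) \<le> CARD('a) ^ (N+1)"
  by (rule order.trans[OF card_mono[OF finite_deg_le rad_sub] card_deg_le])

lemma Delta_le: "Delta_A c m (g::'a::{field,finite} poly) N \<le> N + 1"
proof -
  have le: "CARD('a) ^ Delta_A c m g N \<le> CARD('a) ^ (N+1)"
    by (rule order.trans[OF card_rad_ge card_rad_le])
  have gt: "1 < CARD('a)"
  proof -
    have "card {0::'a, 1} = 2" by simp
    then have "2 \<le> CARD('a)" using card_mono[of "UNIV::'a set" "{0,1}"] by simp
    then show ?thesis by simp
  qed
  show ?thesis using le by (simp only: power_increasing_iff[OF gt])
qed

lemma rad_revd: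
  assumes h: "h \<in> rad_B c m g N"
  shows "revd N h \<in> rad_B c m g N"
proof -
  let ?K = "degree g + m"
  let ?Q = "Qg c m g"
  have dh: "degree h \<le> N" and hz: "\<forall>k\<le>N. coeff (?Q * h) (k + ?K) = 0"
    using h unfolding rad_char by auto
  have e: "?Q * revd N h = revd (2 * ?K + N) (?Q * h)"
    using revd_mult[OF degree_Qg[of c m g] dh] revd_Qg[of g m c] by simp
  have dQh: "degree (?Q * h) \<le> 2 * ?K + N"
    using degree_Qg[of c m g] dh by (meson add_le_mono degree_mult_le order_trans)
  have "coeff (?Q * revd N h) (k + ?K) = 0" if k: "k \<le> N" for k
  proof -
    have "coeff (?Q * revd N h) (k + ?K) = coeff (?Q * h) (2 * ?K + N - (k + ?K))"
      unfolding e using k by (subst coeff_revd[OF dQh]) auto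
    also have "2 * ?K + N - (k + ?K) = (N - k) + ?K" using k by simp
    finally show ?thesis using hz by simp
  qed
  then show ?thesis unfolding rad_char using degree_revd[OF dh] by simp
qed

lemma inter_nonzero:
  fixes R W V :: "'b::ab_group_add set"
  assumes fV: "finite V" and RV: "R \<subseteq> V" and WV: "W \<subseteq> V"
    and Rd: "\<And>x y. x \<in> R \<Longrightarrow> y \<in> R \<Longrightarrow> x - y \<in> R"
    and Wd: "\<And>x y. x \<in> W \<Longrightarrow> y \<in> W \<Longrightarrow> x - y \<in> W"
    and Vd: "\<And>x y. x \<in> V \<Longrightarrow> y \<in> V \<Longrightarrow> x - y \<in> V"
    and c: "card V < card R * card W"
  shows "\<exists>x\<in>R \<inter> W. x \<noteq> 0"
proof -
  define f where "f p = fst p - snd p" for p :: "'b \<times> 'b"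
  have fR: "finite R" and fW: "finite W" using fV RV WV finite_subset by auto
  have im: "f ` (R \<times> W) \<subseteq> V" unfolding f_def using RV WV Vd by (auto intro!: Vd)
  have "\<not> inj_on f (R \<times> W)"
  proof
    assume "inj_on f (R \<times> W)"
    then have "card (R \<times> W) \<le> card V" using im fV by (rule card_inj_on_le)
    then show False using c by (simp add: card_cartesian_product)
  qed
  then obtain p1 p2 where p: "p1 \<in> R \<times> W" "p2 \<in> R \<times> W" "p1 \<noteq> p2" "f p1 = f p2"
    unfolding inj_on_def by blast
  define x where "x = fst p1 - fst p2"
  have x2: "x = snd p1 - snd p2" using p(4) unfolding x_def f_def by (simp add: algebra_simps)
  have "x \<in> R" unfolding x_def using p Rd by auto
  moreover have "x \<in> W" unfolding x2 using p Wd by auto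
  moreover have "x \<noteq> 0"
  proof
    assume "x = 0"
    then have "fst p1 = fst p2" "snd p1 = snd p2" using x2 unfolding x_def by auto
    then show False using p(3) by (simp add: prod_eq_iff)
  qed
  ultimately show ?thesis by auto
qed

lemma revd_shift:
  fixes v :: "'a::comm_ring_1 poly"
  assumes dv: "degree v \<le> D"
  shows "revd (D + 2*a) (monom 1 a * v) = monom 1 a * revd D v"
proof -
  have d: "degree (monom 1 a * v) \<le> D + 2*a"
  proof (rule degree_le, intro allI impI)
    fix i assume "D + 2*a < i"
    then show "coeff (monom 1 a * v) i = 0" using dv by (auto simp: coeff_monom_mult coeff_eq_0)
  qed
  show ?thesis
  proof (rule poly_eqI)
    fix r
    show "coeff (revd (D + 2*a) (monom 1 a * v)) r = coeff (monom 1 a * revd D v) r"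
      using dv by (auto simp: coeff_revd[OF d] coeff_revd[OF dv] coeff_monom_mult coeff_eq_0 add.commute)
  qed
qed


lemma card_gt1: "1 < CARD('a::{field,finite})"
proof -
  have "card {0::'a, 1} = 2" by simp
  then show ?thesis using card_mono[of "UNIV::'a set" "{0,1}"] by simp
qed

lemma exists_u:
  fixes g :: "'a::{field,finite} poly"
  assumes two: "(2::'a) \<noteq> 0" and d1: "1 \<le> \<delta>" and dD: "\<delta> \<le> Delta_A c m g N"
  shows "\<exists>s u. (s = 1 \<or> s = -1) \<and> u \<noteq> 0 \<and> degree u \<le> N - 2 * ((\<delta> - 1) div 2)
     \<and> revd (N - 2 * ((\<delta> - 1) div 2)) u = smult s u
     \<and> monom 1 ((\<delta> - 1) div 2) * u \<in> rad_B c m g N"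
proof -
  define a where "a = (\<delta> - 1) div 2"
  define D where "D = N - 2*a"
  let ?R = "rad_B c m g N"
  let ?V = "{h::'a poly. degree h \<le> N}"
  define W where "W = (\<lambda>v. monom (1::'a) a * v) ` {v. degree v \<le> D}"
  have dN: "\<delta> \<le> N + 1" using dD Delta_le[of c m g N] by simp
  have a2: "2*a < \<delta>" "2*a \<le> N" using d1 dN unfolding a_def by auto
  have ND: "N = D + 2*a" using a2 unfolding D_def by simp
  have q1: "1 < CARD('a)" by (rule card_gt1)
  have m0: "monom (1::'a) a \<noteq> 0" by simp
  have "inj_on (\<lambda>v. monom (1::'a) a * v) {v. degree v \<le> D}"
    using m0 by (auto intro!: inj_onI)
  then have "card W = card {v::'a poly. degree v \<le> D}" unfolding W_def by (rule card_image)
  then have cW: "CARD('a)^(D+1) \<le> card W" using card_deg_ge[of D] by simp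
  have cR: "CARD('a)^\<delta> \<le> card ?R"
    using order.trans[OF power_increasing[OF dD] card_rad_ge] q1 by simp
  have "card ?V \<le> CARD('a)^(N+1)" by (rule card_deg_le)
  also have "\<dots> < CARD('a)^(\<delta> + (D+1))"
    using q1 a2 ND by (intro power_strict_increasing) auto
  also have "\<dots> = CARD('a)^\<delta> * CARD('a)^(D+1)" by (simp add: power_add)
  also have "\<dots> \<le> card ?R * card W" using cR cW by (rule mult_le_mono)
  finally have cc: "card ?V < card ?R * card W" .
  have WV: "W \<subseteq> ?V"
  proof
    fix x assume "x \<in> W"
    then obtain v where v: "x = monom 1 a * v" "degree v \<le> D" unfolding W_def by auto
    have "degree x \<le> a + D" unfolding v(1)
      using v(2) degree_mult_le[of "monom (1::'a) a" v] by (simp add: degree_monom_eq)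
    then show "x \<in> ?V" using ND by simp
  qed
  have Wd: "x - y \<in> W" if xW: "x \<in> W" and yW: "y \<in> W" for x y
  proof -
    obtain v1 where "x = monom 1 a * v1" "degree v1 \<le> D"
      using xW unfolding W_def by blast
    moreover obtain v2 where "y = monom 1 a * v2" "degree v2 \<le> D"
      using yW unfolding W_def by blast
    ultimately show ?thesis unfolding W_def
      by (auto simp: right_diff_distrib[symmetric] intro!: imageI order.trans[OF degree_diff_le])
  qed
  have Vd: "x - y \<in> ?V" if "x \<in> ?V" "y \<in> ?V" for x y
    using that by (auto intro: order.trans[OF degree_diff_le])
  obtain r where r: "r \<in> ?R" "r \<in> W" "r \<noteq> 0"
    using inter_nonzero[OF finite_deg_le rad_sub WV rad_diff Wd Vd cc] by blast
  then obtain v where v: "r = monom 1 a * v" "degree v \<le> D" unfolding W_def by auto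
  have dv': "degree (revd D v) \<le> D" using v(2) by (rule degree_revd)
  have rr: "monom 1 a * revd D v \<in> ?R"
    using rad_revd[OF r(1)] revd_shift[OF v(2), of a] ND v(1) by simp
  define u1 where "u1 = v + revd D v"
  show ?thesis
  proof (cases "u1 = 0")
    case False
    have "revd D u1 = revd D v + revd D (revd D v)" unfolding u1_def using v(2) dv' by (rule revd_add)
    also have "\<dots> = smult 1 u1" unfolding u1_def using revd_revd[OF v(2)] by simp
    finally have "revd D u1 = smult 1 u1" .
    moreover have "monom 1 a * u1 \<in> ?R"
      using rad_add[OF r(1) rr] unfolding u1_def v(1) by (simp add: distrib_left)
    moreover have "degree u1 \<le> D" unfolding u1_def by (rule degree_add_le[OF v(2) dv'])
    ultimately show ?thesis using False unfolding a_def D_def by blast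
  next
    case True
    then have rv: "revd D v = - v" unfolding u1_def by (simp add: eq_neg_iff_add_eq_0 add.commute)
    define u where "u = v - revd D v"
    have "v \<noteq> 0" using r(3) v(1) by auto
    have s2: "smult (1+1) v = v + v" by (simp only: smult_add_left smult_1_left)
    have "u = smult (1+1) v" unfolding u_def rv s2 by simp
    then have "u \<noteq> 0" using two \<open>v \<noteq> 0\<close> by (simp add: one_add_one)
    moreover have "revd D u = smult (-1) u"
      unfolding u_def using revd_diff[OF v(2) dv'] revd_revd[OF v(2)] rv by simp
    moreover have "monom 1 a * u \<in> ?R"
      using rad_diff[OF r(1) rr] unfolding u_def v(1) by (simp add: right_diff_distrib)
    moreover have "degree u \<le> D" unfolding u_def by (rule degree_diff_le[OF v(2) dv'])
    ultimately show ?thesis unfolding a_def D_def by blast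
  qed
qed

context
begin

interpretation fpoly:
  normalization_euclidean_semiring_multiplicative where zero = "0 :: 'a :: field poly"
    and one = 1 and plus = plus and minus = minus
    and times = times
    and normalize = "\<lambda>p. smult (inverse (lead_coeff p)) p"
    and unit_factor = "\<lambda>p. [:lead_coeff p:]"
    and euclidean_size = "\<lambda>p. if p = 0 then 0 else 2 ^ degree p"
    and divide = divide and modulo = modulo
  rewrites "dvd.dvd (times :: 'a poly \<Rightarrow> _) = Rings.dvd"
    and "comm_monoid_mult.prod_mset times 1 = prod_mset"
    and "comm_semiring_1.irreducible times 1 0 = irreducible"
    and "comm_semiring_1.prime_elem times 1 0 = prime_elem"
proof -
  show "dvd.dvd (times :: 'a poly \<Rightarrow> _) = Rings.dvd"
    by (simp add: dvd_dict)
  show "comm_monoid_mult.prod_mset times 1 = prod_mset"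
    by (simp add: prod_mset_dict)
  show "comm_semiring_1.irreducible times 1 0 = irreducible"
    by (simp add: irreducible_dict)
  show "comm_semiring_1.prime_elem times 1 0 = prime_elem"
    by (simp add: prime_elem_dict)
  show "class.normalization_euclidean_semiring_multiplicative divide plus minus (0 :: 'a poly) times 1
    modulo (\<lambda>p. if p = 0 then 0 else 2 ^ degree p)
    (\<lambda>p. [:lead_coeff p:]) (\<lambda>p. smult (inverse (lead_coeff p)) p)"
  proof (standard, fold dvd_dict)
    fix p :: "'a poly"
    show "[:lead_coeff p:] * smult (inverse (lead_coeff p)) p = p"
      by (cases "p = 0") simp_all
  next
    fix p :: "'a poly" assume "is_unit p"
    then show "[:lead_coeff p:] = p"
      by (elim is_unit_polyE) (auto simp: monom_0 one_poly_def field_simps)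
  next
    fix p :: "'a poly" assume "p \<noteq> 0"
    then show "is_unit [:lead_coeff p:]"
      by (simp add: is_unit_pCons_iff)
  next
    fix a b :: "'a poly" assume "is_unit a"
    thus "[:lead_coeff (a * b):] = a * [:lead_coeff b:]"
      by (auto elim!: is_unit_polyE)
  qed (auto simp: lead_coeff_mult Rings.div_mult_mod_eq intro!: degree_mod_less' degree_mult_right_le)
qed


lemma ndiv_bound:
  fixes Q :: "'a::{field,finite} poly"
  assumes Q0: "Q \<noteq> 0" and dQ: "degree Q \<le> M" and t: "t \<ge> 1"
  shows "card {g. lead_coeff g = 1 \<and> g dvd Q} \<le> (M+1)^(CARD('a)^t) * 2^(M div t)"
proof -
  define F where "F = fpoly.prime_factorization Q"
  define S where "S = set_mset F"
  define e where "e (p::'a poly) = count F p" for p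
  define Dv where "Dv = {g. lead_coeff g = 1 \<and> g dvd Q}"
  define \<phi> where "\<phi> (g::'a poly) = restrict (\<lambda>p. count (fpoly.prime_factorization g) p) S" for g
  have fS: "finite S" unfolding S_def by simp
  have nm: "smult (inverse (lead_coeff g)) g = g" if "lead_coeff g = 1" for g :: "'a poly"
    using that by simp
  have sub: "fpoly.prime_factorization g \<subseteq># F" if "g \<in> Dv" for g
  proof -
    have "g \<noteq> 0" using that unfolding Dv_def by auto
    then show ?thesis using that Q0 unfolding Dv_def F_def
      by (simp add: fpoly.prime_factorization_subset_iff_dvd)
  qed
  have "\<phi> ` Dv \<subseteq> PiE S (\<lambda>p. {0..e p})"
  proof
    fix y assume "y \<in> \<phi> ` Dv"
    then obtain g where g: "g \<in> Dv" "y = \<phi> g" by auto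
    have "count (fpoly.prime_factorization g) p \<le> e p" for p
      using sub[OF g(1)] unfolding e_def by (simp add: mset_subset_eq_count)
    then show "y \<in> PiE S (\<lambda>p. {0..e p})" unfolding g(2) \<phi>_def by (simp add: restrict_PiE_iff)
  qed
  moreover have "inj_on \<phi> Dv"
  proof (rule inj_onI)
    fix g1 g2 assume g1: "g1 \<in> Dv" and g2: "g2 \<in> Dv" and e12: "\<phi> g1 = \<phi> g2"
    have "fpoly.prime_factorization g1 = fpoly.prime_factorization g2"
    proof (rule multiset_eqI)
      fix p
      show "count (fpoly.prime_factorization g1) p = count (fpoly.prime_factorization g2) p"
      proof (cases "p \<in> S")
        case True
        then show ?thesis using fun_cong[OF e12, of p] unfolding \<phi>_def by simp
      next
        case False
        then have "count F p = 0" unfolding S_def by (simp add: count_eq_zero_iff)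
        then show ?thesis using mset_subset_eq_count[OF sub[OF g1], of p] mset_subset_eq_count[OF sub[OF g2], of p]
          by simp
      qed
    qed
    moreover have "g1 \<noteq> 0" "g2 \<noteq> 0" using g1 g2 unfolding Dv_def by auto
    moreover note fpoly.prod_mset_prime_factorization[OF \<open>g1 \<noteq> 0\<close>] fpoly.prod_mset_prime_factorization[OF \<open>g2 \<noteq> 0\<close>]
    ultimately have "smult (inverse (lead_coeff g1)) g1 = smult (inverse (lead_coeff g2)) g2"
      by simp
    then show "g1 = g2" using g1 g2 unfolding Dv_def by simp
  qed
  moreover have "finite (PiE S (\<lambda>p. {0..e p}))" using fS by (simp add: finite_PiE)
  ultimately have "card Dv \<le> card (PiE S (\<lambda>p. {0..e p}))"
    by (metis card_inj_on_le)
  also have "\<dots> = (\<Prod>p\<in>S. e p + 1)" using fS by (simp add: card_PiE)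
  finally have c1: "card Dv \<le> (\<Prod>p\<in>S. e p + 1)" .
  have pr: "fpoly.prime p" if "p \<in> S" for p
    using that unfolding S_def F_def by (rule fpoly.in_prime_factors_imp_prime)
  have p0: "p \<noteq> 0" if "p \<in> S" for p using pr[OF that] by auto
  have dp: "degree p \<ge> 1" if "p \<in> S" for p
  proof (rule ccontr)
    assume "\<not> degree p \<ge> 1"
    then have "degree p = 0" by simp
    then have "is_unit p" using p0[OF that] by (simp add: is_unit_iff_degree)
    then show False using pr[OF that] by auto
  qed
  have sumdeg: "(\<Sum>p\<in>S. e p * degree p) \<le> M"
  proof -
    have "prod_mset F = smult (inverse (lead_coeff Q)) Q"
      unfolding F_def using Q0 by (rule fpoly.prod_mset_prime_factorization)
    moreover have "prod_mset F = (\<Prod>p\<in>S. p ^ e p)"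
      unfolding S_def e_def by (rule prod_mset_multiplicity)
    ultimately have "degree (\<Prod>p\<in>S. p ^ e p) = degree Q" by simp
    moreover have "degree (\<Prod>p\<in>S. p ^ e p) = (\<Sum>p\<in>S. degree (p ^ e p))"
      using p0 by (intro degree_prod_eq_sum_degree) simp
    moreover have "(\<Sum>p\<in>S. degree (p ^ e p)) = (\<Sum>p\<in>S. e p * degree p)"
      using p0 by (intro sum.cong) (auto simp: degree_power_eq)
    ultimately show ?thesis using dQ by simp
  qed
  have ele: "e p \<le> M" if "p \<in> S" for p
  proof -
    have "e p \<le> e p * degree p" using dp[OF that] by simp
    also have "\<dots> \<le> (\<Sum>p\<in>S. e p * degree p)" using fS that by (intro member_le_sum) simp_all
    finally show ?thesis using sumdeg by simp
  qed
  define S1 where "S1 = S \<inter> {p. degree p < t}"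
  define S2 where "S2 = S - {p. degree p < t}"
  have "(\<Prod>p\<in>S. e p + 1) = (\<Prod>p\<in>S1. e p + 1) * (\<Prod>p\<in>S2. e p + 1)"
    unfolding S1_def S2_def using fS by (rule prod.Int_Diff)
  also have "\<dots> \<le> (M+1)^(CARD('a)^t) * 2^(M div t)"
  proof (rule mult_le_mono)
    have "(\<Prod>p\<in>S1. e p + 1) \<le> (\<Prod>p\<in>S1. M + 1)"
      using ele by (intro prod_mono) (auto simp: S1_def)
    also have "\<dots> = (M+1) ^ card S1" by simp
    also have "\<dots> \<le> (M+1)^(CARD('a)^t)"
    proof (rule power_increasing)
      have "S1 \<subseteq> {p::'a poly. degree p \<le> t - 1}" unfolding S1_def by auto
      then have "card S1 \<le> card {p::'a poly. degree p \<le> t - 1}"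
        by (rule card_mono[OF finite_deg_le])
      also have "\<dots> \<le> CARD('a) ^ (t - 1 + 1)" by (rule card_deg_le)
      finally show "card S1 \<le> CARD('a)^t" using t by simp
    qed simp
    finally show "(\<Prod>p\<in>S1. e p + 1) \<le> (M+1)^(CARD('a)^t)" .
  next
    have "(\<Prod>p\<in>S2. e p + 1) \<le> (\<Prod>p\<in>S2. 2 ^ e p)"
      by (intro prod_mono) (auto simp: Suc_le_eq)
    also have "\<dots> = 2 ^ (\<Sum>p\<in>S2. e p)" by (simp add: power_sum)
    also have "\<dots> \<le> 2 ^ (M div t)"
    proof (rule power_increasing)
      have "(\<Sum>p\<in>S2. e p) * t = (\<Sum>p\<in>S2. e p * t)" by (simp add: sum_distrib_right)
      also have "\<dots> \<le> (\<Sum>p\<in>S2. e p * degree p)"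
        by (intro sum_mono) (auto simp: S2_def)
      also have "\<dots> \<le> (\<Sum>p\<in>S. e p * degree p)"
        using fS by (intro sum_mono2) (auto simp: S2_def)
      finally have "(\<Sum>p\<in>S2. e p) * t \<le> M" using sumdeg by simp
      then show "(\<Sum>p\<in>S2. e p) \<le> M div t" using t by (simp add: less_eq_div_iff_mult_less_eq)
    qed simp
    finally show "(\<Prod>p\<in>S2. e p + 1) \<le> 2 ^ (M div t)" .
  qed
  finally show ?thesis using c1 unfolding Dv_def by simp
qed

end

definition RecF :: "nat \<Rightarrow> nat \<Rightarrow> nat \<Rightarrow> nat \<Rightarrow> 'a \<Rightarrow> 'a list \<Rightarrow> nat \<Rightarrow> 'a::comm_ring_1" where
  "RecF K N a D s L j = (if j < K - a then L ! j else if j \<le> K + N - a then 0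
      else if j \<le> 2*K + D then s * L ! (2*K + D - j) else 0)"

lemma P_rec:
  fixes Q u :: "'a::field poly"
  assumes s: "s = 1 \<or> s = -1" and du: "degree u \<le> D" and ru: "revd D u = smult s u"
    and zr: "\<forall>k\<le>N. coeff (Q * (monom 1 a * u)) (k + K) = 0"
    and dQ: "degree Q \<le> 2*K" and rQ: "revd (2*K) Q = Q" and ND: "N = D + 2*a"
  shows "coeff (Q*u) j = RecF K N a D s (map (coeff (Q*u)) [0..<K-a]) j"
proof -
  define P where "P = Q * u"
  define M where "M = 2*K + D"
  have dP: "degree P \<le> M" unfolding P_def M_def
    using dQ du by (meson add_le_mono degree_mult_le order_trans)
  have rP: "revd M P = smult s P"
    unfolding P_def M_def using revd_mult[OF dQ du] rQ ru by simp
  have sym: "coeff P j = s * coeff P (M - j)" if "j \<le> M" for j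
  proof -
    have "coeff (revd M P) (M - j) = coeff P (M - (M - j))" by (simp add: coeff_revd[OF dP])
    also have "M - (M - j) = j" using that by simp
    finally show ?thesis unfolding rP by simp
  qed
  have zero: "coeff P j = 0" if "K - a \<le> j" "j \<le> K + N - a" for j
  proof -
    have "j + a - K \<le> N" "j + a - K + K = j + a" using that ND by auto
    then have "coeff (Q * (monom 1 a * u)) (j + a) = 0" using zr by metis
    moreover have "Q * (monom 1 a * u) = monom 1 a * P" unfolding P_def by (simp add: ac_simps)
    ultimately show ?thesis by (simp add: coeff_monom_mult)
  qed
  have Lnth: "map (coeff P) [0..<K-a] ! i = coeff P i" if "i < K - a" for i
    using that by simp
  have main: "coeff P j = (if j < K - a then map (coeff P) [0..<K-a] ! j else if j \<le> K + N - a then 0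
      else if j \<le> M then s * map (coeff P) [0..<K-a] ! (M - j) else 0)"
  proof (cases "j < K - a")
    case True then show ?thesis by simp
  next
    case F1: False
    show ?thesis
    proof (cases "j \<le> K + N - a")
      case True then show ?thesis using F1 zero by simp
    next
      case F2: False
      show ?thesis
      proof (cases "j \<le> M")
        case True
        have "M - j < K - a" using F2 True ND unfolding M_def by linarith
        then show ?thesis using F1 F2 True sym[OF True] by simp
      next
        case False
        then show ?thesis using F1 F2 dP by (simp add: coeff_eq_0)
      qed
    qed
  qed
  then show ?thesis unfolding RecF_def P_def M_def .
qed

lemma count_fiber:
  assumes fA: "finite A" and b: "\<And>y. y \<in> f ` A \<Longrightarrow> card {x\<in>A. f x = y} \<le> b"
  shows "card A \<le> card (f ` A) * b"
proof -
  have "A = (\<Union>y\<in>f ` A. {x\<in>A. f x = y})" by auto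
  then have "card A \<le> (\<Sum>y\<in>f ` A. card {x\<in>A. f x = y})"
    using card_UN_le[of "f ` A" "\<lambda>y. {x\<in>A. f x = y}"] fA by simp
  also have "\<dots> \<le> (\<Sum>y\<in>f ` A. b)" using b by (rule sum_mono)
  finally show ?thesis by simp
qed


lemma finite_Mx: "finite (Mx \<kappa> :: 'a::{field,finite} poly set)"
  by (rule finite_subset[OF _ finite_deg_le[of \<kappa>]]) (auto simp: Mx_def)

lemma finite_monic_dvd:
  fixes Q :: "'a::{field,finite} poly"
  assumes "Q \<noteq> 0"
  shows "finite {g. lead_coeff g = 1 \<and> g dvd Q}"
  by (rule finite_subset[OF _ finite_deg_le[of "degree Q"]]) (auto intro: dvd_imp_degree_le[OF _ assms])

lemma count_ge:
  fixes c :: "nat \<Rightarrow> 'a::{field,finite}"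
  assumes cm: "c m \<noteq> 0" and two: "(2::'a) \<noteq> 0" and d1: "1 \<le> \<delta>" and t: "t \<ge> 1"
  shows "card {g \<in> Mx \<kappa>. \<delta> \<le> Delta_A c m g N}
    \<le> 2 * CARD('a)^(N - 2*((\<delta>-1) div 2) + 1) * CARD('a)^(\<kappa> + m - (\<delta>-1) div 2)
       * ((2*(\<kappa>+m)+1)^(CARD('a)^t) * 2^(2*(\<kappa>+m) div t))"
proof -
  define a where "a = (\<delta> - 1) div 2"
  define D where "D = N - 2*a"
  define K where "K = \<kappa> + m"
  define S where "S = {g \<in> Mx \<kappa>. \<delta> \<le> Delta_A c m g N}"
  define b where "b = (2*(\<kappa>+m)+1)^(CARD('a)^t) * 2^(2*(\<kappa>+m) div t)"
  define Prop where "Prop g x = (case x of (s, u, L) \<Rightarrow> (s = 1 \<or> s = -1) \<and> u \<noteq> 0 \<and> degree u \<le> D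
      \<and> length L = K - a \<and> (\<forall>j. coeff (Qg c m g * u) j = RecF K N a D s L j))"
    for g :: "'a poly" and x :: "'a \<times> 'a poly \<times> 'a list"
  have ex: "\<exists>x. Prop g x" if g: "g \<in> S" for g
  proof -
    have gM: "g \<in> Mx \<kappa>" and dl: "\<delta> \<le> Delta_A c m g N" using g unfolding S_def by auto
    then have dg: "degree g = \<kappa>" unfolding Mx_def by auto
    have dN: "\<delta> \<le> N + 1" using dl Delta_le[of c m g N] by simp
    have ND: "N = D + 2*a" unfolding D_def a_def using d1 dN by auto
    obtain s u where su: "s = 1 \<or> s = -1" "u \<noteq> 0" "degree u \<le> D" "revd D u = smult s u"
        "monom 1 a * u \<in> rad_B c m g N"
      using exists_u[OF two d1 dl] unfolding a_def D_def by blast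
    have zr: "\<forall>k\<le>N. coeff (Qg c m g * (monom 1 a * u)) (k + K) = 0"
      using su(5) unfolding rad_char K_def dg by simp
    have dQ: "degree (Qg c m g) \<le> 2*K" using degree_Qg[of c m g] unfolding K_def dg .
    have rQ: "revd (2*K) (Qg c m g) = Qg c m g" using revd_Qg[of g m c] unfolding K_def dg .
    have "Prop g (s, u, map (coeff (Qg c m g * u)) [0..<K-a])"
      unfolding Prop_def using su P_rec[OF su(1) su(3) su(4) zr dQ rQ ND] by simp
    then show ?thesis by blast
  qed
  define \<psi> where "\<psi> g = (SOME x. Prop g x)" for g
  have P\<psi>: "Prop g (\<psi> g)" if "g \<in> S" for g
    unfolding \<psi>_def using ex[OF that] by (rule someI_ex)
  define T where "T = ({1, -1::'a} \<times> {u::'a poly. degree u \<le> D} \<times> {L::'a list. set L \<subseteq> UNIV \<and> length L = K - a})"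
  have im: "\<psi> ` S \<subseteq> T"
  proof
    fix y assume "y \<in> \<psi> ` S"
    then obtain g where g: "g \<in> S" "y = \<psi> g" by auto
    obtain s u L where y: "y = (s, u, L)" by (cases y) auto
    show "y \<in> T" using P\<psi>[OF g(1)] unfolding g(2)[symmetric] y Prop_def T_def by auto
  qed
  have fT: "finite T" unfolding T_def
    by (intro finite_cartesian_product finite_deg_le) (auto intro: finite_lists_length_eq[of UNIV, simplified])
  have cT: "card T \<le> 2 * CARD('a)^(D+1) * CARD('a)^(K-a)"
  proof -
    have c1: "card {1, -1::'a} \<le> 2" by (simp add: card_insert_if)
    have c3: "card {L::'a list. set L \<subseteq> UNIV \<and> length L = K - a} = CARD('a)^(K-a)"
      by (rule card_lists_length_eq) simp
    have "card T = card {1, -1::'a} * (card {u::'a poly. degree u \<le> D} * CARD('a)^(K-a))"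
      unfolding T_def c3[symmetric] by (simp add: card_cartesian_product)
    also have "\<dots> \<le> 2 * (CARD('a)^(D+1) * CARD('a)^(K-a))"
      using c1 card_deg_le[of D] by (intro mult_le_mono) auto
    finally show ?thesis by simp
  qed
  have fib: "card {g\<in>S. \<psi> g = y} \<le> b" if y: "y \<in> \<psi> ` S" for y
  proof -
    obtain g0 where g0: "g0 \<in> S" "y = \<psi> g0" using y by auto
    obtain s u L where y': "\<psi> g0 = (s, u, L)" by (cases "\<psi> g0") auto
    have g0M: "g0 \<in> Mx \<kappa>" using g0 unfolding S_def by auto
    then have g0nz: "g0 \<noteq> 0" and dg0: "degree g0 = \<kappa>" unfolding Mx_def by auto
    have u0: "u \<noteq> 0" using P\<psi>[OF g0(1)] unfolding y' Prop_def by auto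
    have Q0: "Qg c m g0 \<noteq> 0" by (rule Qg_nz[of c m, OF cm two g0nz])
    have "{g\<in>S. \<psi> g = y} \<subseteq> {g. lead_coeff g = 1 \<and> g dvd Qg c m g0}"
    proof
      fix g assume "g \<in> {g\<in>S. \<psi> g = y}"
      then have g: "g \<in> S" "\<psi> g = (s, u, L)" using g0 y' by auto
      have e1: "\<forall>j. coeff (Qg c m g * u) j = RecF K N a D s L j"
        using P\<psi>[OF g(1)] unfolding g(2) Prop_def by simp
      have e2: "\<forall>j. coeff (Qg c m g0 * u) j = RecF K N a D s L j"
        using P\<psi>[OF g0(1)] unfolding y' Prop_def by simp
      have "Qg c m g * u = Qg c m g0 * u"
        by (rule poly_eqI) (simp add: e1 e2)
      then have "Qg c m g = Qg c m g0" using u0 by simp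
      moreover have "g dvd Qg c m g" unfolding Qg_def by simp
      moreover have "lead_coeff g = 1" using g(1) unfolding S_def Mx_def by auto
      ultimately show "g \<in> {g. lead_coeff g = 1 \<and> g dvd Qg c m g0}" by simp
    qed
    then have "card {g\<in>S. \<psi> g = y} \<le> card {g. lead_coeff g = 1 \<and> g dvd Qg c m g0}"
      by (rule card_mono[OF finite_monic_dvd[OF Q0]])
    also have "\<dots> \<le> b" unfolding b_def
      by (rule ndiv_bound[OF Q0 _ t]) (use degree_Qg[of c m g0] dg0 in simp)
    finally show ?thesis .
  qed
  have fS: "finite S" unfolding S_def by (rule finite_subset[OF _ finite_Mx]) auto
  have "card S \<le> card (\<psi> ` S) * b" by (rule count_fiber[OF fS fib])
  also have "\<dots> \<le> card T * b" using card_mono[OF fT im] by simp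
  also have "\<dots> \<le> 2 * CARD('a)^(D+1) * CARD('a)^(K-a) * b" using cT by simp
  finally show ?thesis unfolding S_def b_def D_def a_def K_def by simp
qed

lemma card_Mx: "card (Mx \<kappa> :: 'a::{field,finite} poly set) \<le> CARD('a) ^ \<kappa>"
proof -
  have "inj_on (\<lambda>g::'a poly. map (coeff g) [0..<\<kappa>]) (Mx \<kappa>)"
  proof (rule inj_onI)
    fix p q :: "'a poly" assume p: "p \<in> Mx \<kappa>" and q: "q \<in> Mx \<kappa>"
      and e: "map (coeff p) [0..<\<kappa>] = map (coeff q) [0..<\<kappa>]"
    show "p = q"
    proof (rule poly_eqI)
      fix i
      show "coeff p i = coeff q i"
      proof (cases "i < \<kappa>")
        case True
        have "coeff p i = map (coeff p) [0..<\<kappa>] ! i" using True by simp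
        also have "\<dots> = map (coeff q) [0..<\<kappa>] ! i" using e by (simp only:)
        also have "\<dots> = coeff q i" using True by simp
        finally show ?thesis .
      next
        case False
        then show ?thesis using p q unfolding Mx_def
          by (cases "i = \<kappa>") (auto simp: coeff_eq_0)
      qed
    qed
  qed
  moreover have "(\<lambda>g::'a poly. map (coeff g) [0..<\<kappa>]) ` Mx \<kappa> \<subseteq> {xs. set xs \<subseteq> UNIV \<and> length xs = \<kappa>}"
    by auto
  ultimately have "card (Mx \<kappa> :: 'a poly set) \<le> card {xs::'a list. set xs \<subseteq> UNIV \<and> length xs = \<kappa>}"
    by (intro card_inj_on_le) (auto intro: finite_lists_length_eq[of UNIV, simplified])
  also have "\<dots> = CARD('a) ^ \<kappa>" by (rule card_lists_length_eq) simp
  finally show ?thesis .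
qed


lemma term_bound:
  fixes c :: "nat \<Rightarrow> 'a::{field,finite}"
  assumes cm: "c m \<noteq> 0" and two: "(2::'a) \<noteq> 0" and t: "t \<ge> 1" and C: "C \<ge> 0"
    and hN: "real N \<le> 4/3 * real \<kappa> + C" and dN: "\<delta> \<le> N + 1"
  shows "real (card {g \<in> Mx \<kappa>. Delta_A c m g N = \<delta>}) * real CARD('a) powr (real \<delta> / 2)
    \<le> 2 * real CARD('a) powr (real m + 4 + C)
       * real ((2*(\<kappa>+m)+1)^(CARD('a)^t) * 2^(2*(\<kappa>+m) div t))
       * real CARD('a) powr (real \<kappa> + 3 * real N / 8)"
proof -
  define q where "q = real CARD('a)"
  define Bt where "Bt = real ((2*(\<kappa>+m)+1)^(CARD('a)^t) * 2^(2*(\<kappa>+m) div t))"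
  have q1: "1 < q" unfolding q_def using card_gt1[where 'a='a] by simp
  have q0: "0 < q" using q1 by simp
  have Bt1: "1 \<le> Bt" unfolding Bt_def
  proof -
    have "1 \<le> (2*(\<kappa>+m)+1)^(CARD('a)^t)" by simp
    moreover have "1 \<le> (2::nat)^(2*(\<kappa>+m) div t)" by simp
    ultimately have "1 \<le> (2*(\<kappa>+m)+1)^(CARD('a)^t) * (2::nat)^(2*(\<kappa>+m) div t)"
      by (metis mult_le_mono nat_mult_1)
    then show "1 \<le> real ((2*(\<kappa>+m)+1)^(CARD('a)^t) * 2^(2*(\<kappa>+m) div t))" by linarith
  qed
  have F1: "1 \<le> 2 * q powr (real m + 4 + C) * Bt"
  proof -
    have "1 \<le> q powr (real m + 4 + C)" using q1 C by (intro ge_one_powr_ge_zero) auto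
    then have "1 * 1 \<le> q powr (real m + 4 + C) * Bt" using Bt1 by (intro mult_mono) auto
    then show ?thesis by simp
  qed
  have main: "real (card {g \<in> Mx \<kappa>. Delta_A c m g N = \<delta>}) * q powr (real \<delta> / 2)
    \<le> 2 * q powr (real m + 4 + C) * Bt * q powr (real \<kappa> + 3 * real N / 8)"
  proof (cases "real \<delta> \<le> 3 * real N / 4")
    case True
    have "card {g \<in> Mx \<kappa>. Delta_A c m g N = \<delta>} \<le> card (Mx \<kappa> :: 'a poly set)"
      by (rule card_mono[OF finite_Mx]) auto
    also have "\<dots> \<le> CARD('a) ^ \<kappa>" by (rule card_Mx)
    finally have "real (card {g \<in> Mx \<kappa>. Delta_A c m g N = \<delta>}) \<le> q powr real \<kappa>"
      unfolding q_def using q0 by (simp add: powr_realpow q_def)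
    then have "real (card {g \<in> Mx \<kappa>. Delta_A c m g N = \<delta>}) * q powr (real \<delta> / 2)
        \<le> q powr real \<kappa> * q powr (real \<delta> / 2)" by (rule mult_right_mono) simp
    also have "\<dots> = q powr (real \<kappa> + real \<delta> / 2)" by (simp add: powr_add)
    also have "\<dots> \<le> q powr (real \<kappa> + 3 * real N / 8)" using True q1 by (intro powr_mono) auto
    also have "\<dots> \<le> (2 * q powr (real m + 4 + C) * Bt) * q powr (real \<kappa> + 3 * real N / 8)"
      using mult_right_mono[OF F1, of "q powr (real \<kappa> + 3 * real N / 8)"] by simp
    finally show ?thesis by simp
  next
    case False
    then have d1: "1 \<le> \<delta>" by (cases \<delta>) auto
    define a where "a = (\<delta> - 1) div 2"
    define D where "D = N - 2*a"
    have a2: "2*a \<le> \<delta> - 1" "\<delta> \<le> 2*a + 2" "2*a \<le> N" using d1 dN unfolding a_def by auto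
    have "{g \<in> Mx \<kappa>. Delta_A c m g N = \<delta>} \<subseteq> {g \<in> Mx \<kappa>. \<delta> \<le> Delta_A c m g N}" by auto
    then have "card {g \<in> Mx \<kappa>. Delta_A c m g N = \<delta>} \<le> card {g \<in> Mx \<kappa>. \<delta> \<le> Delta_A c m g N}"
      by (intro card_mono) (auto intro: finite_subset[OF _ finite_Mx])
    also have "\<dots> \<le> 2 * CARD('a)^(D + 1) * CARD('a)^(\<kappa> + m - a)
       * ((2*(\<kappa>+m)+1)^(CARD('a)^t) * 2^(2*(\<kappa>+m) div t))"
      using count_ge[of c m \<delta> t \<kappa> N, OF cm two d1 t] unfolding a_def D_def .
    finally have "real (card {g \<in> Mx \<kappa>. Delta_A c m g N = \<delta>})
        \<le> real (2 * CARD('a)^(D + 1) * CARD('a)^(\<kappa> + m - a)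
       * ((2*(\<kappa>+m)+1)^(CARD('a)^t) * 2^(2*(\<kappa>+m) div t)))" by (simp only: of_nat_le_iff)
    also have "\<dots> = 2 * q ^ (D + 1) * q ^ (\<kappa> + m - a) * Bt"
      unfolding Bt_def q_def by simp
    also have "\<dots> = 2 * q powr real (D + 1) * q powr real (\<kappa> + m - a) * Bt"
      by (simp only: powr_realpow[OF q0])
    finally have "real (card {g \<in> Mx \<kappa>. Delta_A c m g N = \<delta>})
        \<le> 2 * q powr real (D + 1) * q powr real (\<kappa> + m - a) * Bt" .
    then have "real (card {g \<in> Mx \<kappa>. Delta_A c m g N = \<delta>}) * q powr (real \<delta> / 2)
        \<le> 2 * q powr real (D + 1) * q powr real (\<kappa> + m - a) * Bt * q powr (real \<delta> / 2)"
      by (rule mult_right_mono) simp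
    also have "\<dots> = 2 * Bt * q powr (real (D + 1) + real (\<kappa> + m - a) + real \<delta> / 2)"
      by (simp add: powr_add)
    also have "\<dots> \<le> 2 * Bt * q powr (real m + 4 + C + (real \<kappa> + 3 * real N / 8))"
    proof -
      have "real (D + 1) + real (\<kappa> + m - a) + real \<delta> / 2 \<le> real m + 4 + C + (real \<kappa> + 3 * real N / 8)"
      proof (cases "a \<le> \<kappa> + m")
        case True
        have "real (D+1) = real N - 2 * real a + 1" unfolding D_def using a2 by simp
        moreover have "real (\<kappa> + m - a) = real \<kappa> + real m - real a" using True by simp
        moreover have "real \<delta> \<le> 2 * real a + 2" using a2 by simp
        ultimately show ?thesis using False C by linarith
      next
        case F2: False
        have "real (D+1) = real N - 2 * real a + 1" unfolding D_def using a2 by simp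
        moreover have "real (\<kappa> + m - a) = 0" using F2 by simp
        moreover have "real \<delta> \<le> 2 * real a + 2" using a2 by simp
        moreover have "real \<kappa> + real m < real a" using F2 by simp
        ultimately show ?thesis using hN C by linarith
      qed
      then show ?thesis using q1 Bt1 by (intro mult_left_mono powr_mono) auto
    qed
    also have "\<dots> = 2 * q powr (real m + 4 + C) * Bt * q powr (real \<kappa> + 3 * real N / 8)"
      by (simp add: powr_add)
    finally show ?thesis .
  qed
  then show ?thesis unfolding q_def Bt_def .
qed


lemma sum_bound:
  fixes c :: "nat \<Rightarrow> 'a::{field,finite}"
  assumes cm: "c m \<noteq> 0" and two: "(2::'a) \<noteq> 0" and t: "t \<ge> 1" and C: "C \<ge> 0"
    and hN: "real N \<le> 4/3 * real \<kappa> + C"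
  shows "(\<Sum>g\<in>Mx \<kappa>. real CARD('a) powr (real (Delta_A c m g N) / 2))
    \<le> real (N + 2) * (2 * real CARD('a) powr (real m + 4 + C)
       * real ((2*(\<kappa>+m)+1)^(CARD('a)^t) * 2^(2*(\<kappa>+m) div t))
       * real CARD('a) powr (real \<kappa> + 3 * real N / 8))"
proof -
  define E where "E = 2 * real CARD('a) powr (real m + 4 + C)
       * real ((2*(\<kappa>+m)+1)^(CARD('a)^t) * 2^(2*(\<kappa>+m) div t))
       * real CARD('a) powr (real \<kappa> + 3 * real N / 8)"
  have im: "(\<lambda>g. Delta_A c m g N) ` Mx \<kappa> \<subseteq> {0..N+1}" using Delta_le by auto
  have "(\<Sum>g\<in>Mx \<kappa>. real CARD('a) powr (real (Delta_A c m g N) / 2))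
      = (\<Sum>\<delta>\<in>{0..N+1}. \<Sum>g\<in>{x \<in> Mx \<kappa>. Delta_A c m x N = \<delta>}. real CARD('a) powr (real (Delta_A c m g N) / 2))"
    by (rule sum.group[symmetric, OF finite_Mx _ im]) simp
  also have "\<dots> = (\<Sum>\<delta>\<in>{0..N+1}. real (card {x \<in> Mx \<kappa>. Delta_A c m x N = \<delta>}) * real CARD('a) powr (real \<delta> / 2))"
    by (intro sum.cong refl) simp
  also have "\<dots> \<le> (\<Sum>\<delta>\<in>{0..N+1}. E)"
    unfolding E_def by (intro sum_mono term_bound[of c m, OF cm two t C hN]) simp
  also have "\<dots> = real (N + 2) * E" by simp
  finally show ?thesis unfolding E_def .
qed

lemma ln_over_n:
  assumes c: "c \<ge> 1"
  shows "(\<lambda>n. ln (real n + c) / real n) \<longlonglongrightarrow> 0"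
proof -
  have f1: "filterlim (\<lambda>n. c + real n) at_top sequentially"
    by (rule filterlim_tendsto_add_at_top[OF tendsto_const filterlim_real_sequentially])
  then have f1': "filterlim (\<lambda>n. real n + c) at_top sequentially" by (simp add: add.commute)
  have l1: "(\<lambda>n. ln (real n + c) / (real n + c)) \<longlonglongrightarrow> 0"
    using filterlim_compose[OF ln_x_over_x_tendsto_0 f1'] by simp
  have l2: "(\<lambda>n. 1 + c / real n) \<longlonglongrightarrow> 1"
    using tendsto_add[OF tendsto_const lim_const_over_n[of c]] by simp
  have "(\<lambda>n. ln (real n + c) / (real n + c) * (1 + c / real n)) \<longlonglongrightarrow> 0 * 1"
    by (rule tendsto_mult[OF l1 l2])
  moreover have "\<forall>\<^sub>F n in sequentially. ln (real n + c) / (real n + c) * (1 + c / real n) = ln (real n + c) / real n"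
  proof (rule eventually_sequentiallyI[of 1])
    fix n :: nat assume "1 \<le> n"
    then have "real n > 0" "real n + c > 0" using c by auto
    then have e: "1 + c / real n = (real n + c) / real n" by (simp add: field_simps)
    have aux: "x / a * (a / b) = x / b" if "(a::real) > 0" "b > 0" for x a b
      using that by (simp add: field_simps)
    show "ln (real n + c) / (real n + c) * (1 + c / real n) = ln (real n + c) / real n"
      unfolding e using \<open>real n + c > 0\<close> \<open>real n > 0\<close> by (rule aux)
  qed
  ultimately show ?thesis using Lim_transform_eventually by fastforce
qed

theorem proposition6p3:
  fixes c :: "nat \<Rightarrow> 'a::{field,finite}" and m :: nat and C :: real
  assumes "odd CARD('a)" and "c m \<noteq> 0" and "C \<ge> 0"
  shows "\<exists>K>0. \<exists>\<epsilon> :: nat \<Rightarrow> real. \<epsilon> \<longlonglongrightarrow> 0 \<and>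
    (\<forall>n \<kappa> N. real \<kappa> \<le> real n + C \<and> real N \<le> real n + C \<and> real N \<le> 4/3 * real \<kappa> + C \<longrightarrow>
       (\<Sum>g\<in>Mx \<kappa>. real CARD('a) powr (real (Delta_A c m g N) / 2))
         \<le> K * real CARD('a) powr (real \<kappa> + 3 * real N / 8 + \<epsilon> n * real n))"
proof -
  have two: "(2::'a) \<noteq> 0" using two_neq_zero assms(1) by blast
  have cm: "c m \<noteq> 0" by fact
  have C: "C \<ge> 0" by fact
  define q where "q = real CARD('a)"
  have q1: "1 < q" unfolding q_def using card_gt1[where 'a='a] by simp
  have q0: "0 < q" using q1 by simp
  have lq: "0 < ln q" using q1 by simp
  define c0 where "c0 = nat \<lceil>C\<rceil>"
  have Cc0: "C \<le> real c0" unfolding c0_def by linarith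
  define cc where "cc = real c0 + real m + 1"
  have cc1: "cc \<ge> 1" unfolding cc_def by simp
  define Bn where "Bn t k = real ((2*(k+m)+1)^(CARD('a)^t) * 2^(2*(k+m) div t))" for t k :: nat
  define Xf where "Xf t n = real (n + c0 + 2) * Bn t (n + c0)" for t n :: nat
  define Xb where "Xb n = Min ((\<lambda>t. Xf t n) ` {1..n+1})" for n :: nat
  define eps where "eps n = (if n = 0 then 0 else log q (Xb n) / real n)" for n :: nat
  define K1 where "K1 = 2 * q powr (real m + 4 + C)"
  have K1p: "K1 > 0" unfolding K1_def using q0 by simp
  have Bn1: "1 \<le> Bn t k" for t k
  proof -
    have "1 \<le> (2*(k+m)+1)^(CARD('a)^t)" by simp
    moreover have "1 \<le> (2::nat)^(2*(k+m) div t)" by simp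
    ultimately have "1 * 1 \<le> (2*(k+m)+1)^(CARD('a)^t) * (2::nat)^(2*(k+m) div t)"
      by (rule mult_le_mono)
    then show ?thesis unfolding Bn_def by linarith
  qed
  have Bn_mono: "Bn t k \<le> Bn t k'" if "k \<le> k'" for t k k'
  proof -
    have "(2*(k+m)+1)^(CARD('a)^t) \<le> (2*(k'+m)+1)^(CARD('a)^t)"
      using that by (intro power_mono) auto
    moreover have "(2::nat)^(2*(k+m) div t) \<le> 2^(2*(k'+m) div t)"
      using that by (intro power_increasing div_le_mono) auto
    ultimately show ?thesis unfolding Bn_def by (simp only: of_nat_le_iff) (rule mult_le_mono)
  qed
  have Xf1: "1 \<le> Xf t n" for t n
  proof -
    have "1 * 1 \<le> real (n + c0 + 2) * Bn t (n + c0)"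
      using Bn1[of t "n + c0"] by (intro mult_mono) auto
    then show ?thesis unfolding Xf_def by simp
  qed
  have finX: "finite ((\<lambda>t. Xf t n) ` {1..n+1})" "(\<lambda>t. Xf t n) ` {1..n+1} \<noteq> {}" for n by auto
  have Xb_ex: "\<exists>t\<in>{1..n+1}. Xb n = Xf t n" for n
  proof -
    have "Xb n \<in> (\<lambda>t. Xf t n) ` {1..n+1}" unfolding Xb_def by (rule Min_in[OF finX(1) finX(2)])
    then obtain t where "t \<in> {1..n+1}" "Xb n = Xf t n" by blast
    then show ?thesis by blast
  qed
  have Xb_le: "Xb n \<le> Xf t n" if "t \<in> {1..n+1}" for n t
    unfolding Xb_def using that by (intro Min_le finX(1)) auto
  have Xb1: "1 \<le> Xb n" for n using Xb_ex[of n] Xf1 by auto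
  define K where "K = K1 * Xb 0"
  have Kp: "K > 0" unfolding K_def using K1p Xb1[of 0] by simp
  have bound: "(\<Sum>g\<in>Mx \<kappa>. q powr (real (Delta_A c m g N) / 2))
         \<le> K * q powr (real \<kappa> + 3 * real N / 8 + eps n * real n)"
    if h1: "real \<kappa> \<le> real n + C" and h2: "real N \<le> real n + C" and h3: "real N \<le> 4/3 * real \<kappa> + C"
    for n \<kappa> N
  proof -
    obtain t where t: "t \<in> {1..n+1}" "Xb n = Xf t n" using Xb_ex by blast
    have t1: "t \<ge> 1" using t by simp
    define E where "E = real \<kappa> + 3 * real N / 8"
    have "(\<Sum>g\<in>Mx \<kappa>. q powr (real (Delta_A c m g N) / 2)) \<le> real (N + 2) * (K1 * Bn t \<kappa> * q powr E)"
      using sum_bound[of c m t C N \<kappa>, OF cm two t1 C h3] unfolding q_def K1_def Bn_def E_def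
      by (simp add: mult.assoc)
    also have "\<dots> \<le> real (n + c0 + 2) * (K1 * Bn t (n + c0) * q powr E)"
    proof (rule mult_mono)
      show "real (N + 2) \<le> real (n + c0 + 2)" using h2 Cc0 by simp
      have "\<kappa> \<le> n + c0" using h1 Cc0 by linarith
      then have "Bn t \<kappa> \<le> Bn t (n + c0)" by (rule Bn_mono)
      then show "K1 * Bn t \<kappa> * q powr E \<le> K1 * Bn t (n + c0) * q powr E"
        using K1p q0 by (intro mult_right_mono mult_left_mono) auto
    qed (use K1p Bn1[of t \<kappa>] q0 in auto)
    also have "\<dots> = K1 * Xb n * q powr E" unfolding t(2) Xf_def by (simp add: ac_simps)
    also have "\<dots> \<le> K * q powr (E + eps n * real n)"
    proof (cases "n = 0")
      case True
      then show ?thesis unfolding K_def eps_def by simp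
    next
      case False
      have "Xb n = q powr (log q (Xb n))" using q1 Xb1[of n] by (simp add: powr_log_cancel)
      then have "K1 * Xb n * q powr E = K1 * q powr (E + eps n * real n)"
        unfolding eps_def using False by (simp add: powr_add ac_simps)
      also have "\<dots> \<le> K1 * Xb 0 * q powr (E + eps n * real n)"
        using K1p Xb1[of 0] q0 by (simp add: mult_le_cancel_left1 mult.assoc)
      finally show ?thesis unfolding K_def .
    qed
    finally show ?thesis unfolding E_def .
  qed
  have lim: "eps \<longlonglongrightarrow> 0"
  proof (unfold LIMSEQ_iff, intro allI impI)
    fix r :: real assume r: "r > 0"
    define T where "T = nat \<lceil>4 * ln 2 / (r * ln q)\<rceil> + 1"
    have T1: "T \<ge> 1" unfolding T_def by simp
    have TT: "real T > 4 * ln 2 / (r * ln q)" unfolding T_def by linarith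
    have LT: "2 * ln 2 / (real T * ln q) < r / 2"
    proof -
      have "4 * ln 2 < real T * (r * ln q)" using TT r lq by (simp add: pos_divide_less_eq)
      then show ?thesis using T1 lq by (simp add: divide_less_eq field_simps)
    qed
    define Qt where "Qt = q ^ T"
    define U where "U n = (1 + Qt) / ln q * (ln 2 / real n + ln (real n + cc) / real n)
        + 2 * ln 2 / (real T * ln q) * (1 + cc / real n)" for n :: nat
    have "U \<longlonglongrightarrow> (1 + Qt) / ln q * (0 + 0) + 2 * ln 2 / (real T * ln q) * (1 + 0)"
      unfolding U_def
      by (intro tendsto_intros lim_const_over_n ln_over_n[OF cc1])
    then have "U \<longlonglongrightarrow> 2 * ln 2 / (real T * ln q)" by simp
    then obtain no where no: "\<forall>n\<ge>no. norm (U n - 2 * ln 2 / (real T * ln q)) < r / 2"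
      using r unfolding LIMSEQ_iff by (meson half_gt_zero)
    show "\<exists>no. \<forall>n\<ge>no. norm (eps n - 0) < r"
    proof (intro exI allI impI)
      fix n assume n: "n \<ge> max no T"
      then have n1: "n \<ge> 1" using T1 by simp
      have "norm (U n - 2 * ln 2 / (real T * ln q)) < r / 2" using no n by auto
      then have Un: "U n < r" using LT unfolding real_norm_def by linarith
      have e0: "0 \<le> eps n" unfolding eps_def using Xb1[of n] q1 by simp
      have "eps n = log q (Xb n) / real n" unfolding eps_def using n1 by simp
      also have "\<dots> \<le> log q (Xf T n) / real n"
      proof -
        have "Xb n \<le> Xf T n" using n T1 by (intro Xb_le) auto
        then have "log q (Xb n) \<le> log q (Xf T n)" using q1 Xb1[of n] by simp
        then show ?thesis using n1 by (simp add: divide_right_mono)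
      qed
      also have "\<dots> \<le> U n"
      proof -
        define A where "A = 2 * (n + c0 + m)"
        have xf: "Xf T n = real (n + c0 + 2) * (real (A + 1)) ^ (CARD('a)^T) * 2 ^ (A div T)"
          unfolding Xf_def Bn_def A_def by simp
        have lnX: "ln (Xf T n) = ln (real (n + c0 + 2)) + Qt * ln (real (A + 1)) + real (A div T) * ln 2"
          unfolding xf Qt_def q_def by (simp add: ln_mult ln_realpow)
        have l1: "ln (real (n + c0 + 2)) \<le> ln 2 + ln (real n + cc)"
        proof -
          have a: "real (n + c0 + 2) \<le> 2 * (real n + cc)" unfolding cc_def by simp
          have "ln (real (n + c0 + 2)) \<le> ln (2 * (real n + cc))" using a cc1 by (subst ln_le_cancel_iff) auto
          also have "ln (2 * (real n + cc)) = ln 2 + ln (real n + cc)" using cc1 by (subst ln_mult) (auto simp del: distrib_left_numeral)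
          finally show ?thesis .
        qed
        have l2: "ln (real (A + 1)) \<le> ln 2 + ln (real n + cc)"
        proof -
          have a: "real (A + 1) \<le> 2 * (real n + cc)" unfolding cc_def A_def by simp
          have "ln (real (A + 1)) \<le> ln (2 * (real n + cc))" using a cc1 by (subst ln_le_cancel_iff) auto
          also have "ln (2 * (real n + cc)) = ln 2 + ln (real n + cc)" using cc1 by (subst ln_mult) (auto simp del: distrib_left_numeral)
          finally show ?thesis .
        qed
        have l3: "real (A div T) \<le> 2 * (real n + cc) / real T"
        proof -
          have "(A div T) * T \<le> A" by simp
          then have "real (A div T) * real T \<le> real A" by (metis of_nat_le_iff of_nat_mult)
          moreover have "real A \<le> 2 * (real n + cc)" unfolding A_def cc_def by simp
          ultimately show ?thesis using T1 by (simp add: pos_le_divide_eq)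
        qed
        have Qt0: "Qt \<ge> 0" unfolding Qt_def using q0 by simp
        have "ln (Xf T n) \<le> (ln 2 + ln (real n + cc)) + Qt * (ln 2 + ln (real n + cc)) + 2 * (real n + cc) / real T * ln 2"
          unfolding lnX using l1 mult_left_mono[OF l2 Qt0] mult_right_mono[OF l3, of "ln 2"] by simp
        also have "\<dots> = (1 + Qt) * (ln 2 + ln (real n + cc)) + 2 * (real n + cc) / real T * ln 2"
          by (simp add: algebra_simps)
        finally have lX: "ln (Xf T n) \<le> (1 + Qt) * (ln 2 + ln (real n + cc)) + 2 * (real n + cc) / real T * ln 2" .
        have "log q (Xf T n) / real n = ln (Xf T n) / (ln q * real n)" by (simp add: log_def)
        also have "\<dots> \<le> ((1 + Qt) * (ln 2 + ln (real n + cc)) + 2 * (real n + cc) / real T * ln 2) / (ln q * real n)"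
          using lX lq n1 by (intro divide_right_mono) auto
        also have "\<dots> = U n"
          unfolding U_def using lq n1 T1 by (simp add: field_simps)
        finally show ?thesis .
      qed
      finally have "eps n \<le> U n" .
      then show "norm (eps n - 0) < r" using e0 Un by simp
    qed
  qed
  show ?thesis
    using Kp lim bound unfolding q_def by blast
qed

end
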